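(* Let $p\ge 2$, let $\mathcal{N}$ be a finite nonempty index set, let $\{\hat{\bm{\Sigma}}(t_i)\}_{i\in\mathcal{N}}$ be $p\times p$ symmetric positive semidefinite matrices with entries $\hat{\Sigma}_{uv}(t_i)$, and let $\lambda>0$. For a tuple $\mathbb{\Omega}=\{\bm{\Omega}(t_i)\}_{i\in\mathcal{N}}$ of $p\times p$ symmetric positive definite matrices define $$L(\mathbb{\Omega})=\frac{1}{\sqrt{|\mathcal{N}|}}\sum_{i\in\mathcal{N}}\Big[\operatorname{tr}\big(\bm{\Omega}(t_i)\hat{\bm{\Sigma}}(t_i)\big)-\log\det\bm{\Omega}(t_i)\Big]+\lambda\sum_{u\neq v}\sqrt{\sum_{i\in\mathcal{N}}\Omega_{uv}(t_i)^2},$$ and let $\{\hat{\bm{\Omega}}(t_i)\}_{i\in\mathcal{N}}$ be its minimizer over tuples of positive definite matrices. Let $\{G_1,G_2\}$ be a partition of $\{1,\dots,p\}$ into two disjoint sets. Then the variables in $G_1$ are completely disconnected from those in $G_2$ in all estimated precision matrices, i.e. $\hat{\Omega}_{uv}(t_i)=0$ for all $u\in G_1$, $v\in G_2$, $i\in\mathcal{N}$, if and only if $$\frac{1}{|\mathcal{N}|}\sum_{i\in\mathcal{N}}\hat{\Sigma}_{uv}(t_i)^2\le\lambda^2\qquad\text{for all } u\in G_1,\ v\in G_2.$$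
   Context: In the paper, $\mathcal{N}=\mathcal{N}_{k,d}=\{i:|t_i-t_k|\le d\}$ is the set of indices of observation times $0\le t_1\le\dots\le t_N\le 1$ within distance $d$ of $t_k$, and $\hat{\bm{\Sigma}}(t)=\sum_{j=1}^N \omega_h^{t_j}(t)\bm{x}_j\bm{x}_j^T$ is a kernel estimate of the covariance matrix, with weights $\omega_h^{t_j}(t)=K((t_j-t)/h)/\sum_{j'}K((t_{j'}-t)/h)$ for a symmetric nonnegative kernel $K$ and bandwidth $h>0$, based on observations $\bm{x}_j\in\mathbb{R}^p$. The objective $L$ is strictly convex, so its minimizer, when it exists, is unique. *)

theory Defs
  imports "HOL-Analysis.Analysis"
begin

definition sym_mat :: "real^'p^'p \<Rightarrow> bool" where
  "sym_mat A \<longleftrightarrow> transpose A = A"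

definition psd_mat :: "real^'p^'p \<Rightarrow> bool" where
  "psd_mat A \<longleftrightarrow> sym_mat A \<and> (\<forall>x. x \<bullet> (A *v x) \<ge> 0)"

definition pd_mat :: "real^'p^'p \<Rightarrow> bool" where
  "pd_mat A \<longleftrightarrow> sym_mat A \<and> (\<forall>x. x \<noteq> 0 \<longrightarrow> x \<bullet> (A *v x) > 0)"

definition L_obj :: "'i set \<Rightarrow> ('i \<Rightarrow> real^'p^'p) \<Rightarrow> real \<Rightarrow> ('i \<Rightarrow> real^'p^'p) \<Rightarrow> real" where
  "L_obj N S lam Om =
     (1 / sqrt (real (card N))) * (\<Sum>i\<in>N. trace (Om i ** S i) - ln (det (Om i)))
     + lam * (\<Sum>u\<in>UNIV. \<Sum>v\<in>UNIV - {u}. sqrt (\<Sum>i\<in>N. (Om i $ u $ v)\<^sup>2))"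

definition is_minimizer :: "'i set \<Rightarrow> ('i \<Rightarrow> real^'p^'p) \<Rightarrow> real \<Rightarrow> ('i \<Rightarrow> real^'p^'p) \<Rightarrow> bool" where
  "is_minimizer N S lam Omh \<longleftrightarrow>
     (\<forall>i\<in>N. pd_mat (Omh i)) \<and>
     (\<forall>Om. (\<forall>i\<in>N. pd_mat (Om i)) \<longrightarrow> L_obj N S lam Omh \<le> L_obj N S lam Om)"

end

theory Submission
  imports Defs
begin


lemma qf_expand: "(x::real^'n) \<bullet> (A *v x) = (\<Sum>j\<in>UNIV. \<Sum>k\<in>UNIV. x$j * A$j$k * x$k)"
  by (simp add: inner_vec_def matrix_vector_mult_def sum_distrib_left mult.assoc)

lemma inner_mat_transpose: "(x::real^'n) \<bullet> (A *v y) = (transpose A *v x) \<bullet> y"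
  by (metis dot_lmul_matrix vector_transpose_matrix transpose_transpose)

lemma pd_ker: "pd_mat A \<Longrightarrow> A *v x = 0 \<Longrightarrow> x = 0"
  unfolding pd_mat_def by (metis inner_zero_right less_irrefl)

lemma pd_invertible: "pd_mat (A::real^'n^'n) \<Longrightarrow> invertible A"
  unfolding invertible_left_inverse matrix_left_invertible_ker using pd_ker by blast

lemma pd_sym: "pd_mat A \<Longrightarrow> transpose A = A"
  by (simp add: pd_mat_def sym_mat_def)

lemma det_affine_eq: "det (A + t *\<^sub>R B :: real^'n^'n) =
   (\<Sum>p\<in>{p. p permutes UNIV}. of_int (sign p) * (\<Prod>i\<in>UNIV. A$i$(p i) + t * B$i$(p i)))"
  by (simp add: det_def)

lemma det_affine_deriv: "\<exists>D. ((\<lambda>t. det (A + t *\<^sub>R B :: real^'n^'n)) has_field_derivative D) (at t0)"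
proof -
  note [derivative_intros] = has_field_derivative_prod
  have "((\<lambda>t. \<Sum>p\<in>{p. p permutes UNIV}. of_int (sign p) * (\<Prod>i\<in>UNIV. A$i$(p i) + t * B$i$(p i)))
     has_field_derivative (\<Sum>p\<in>{p. p permutes UNIV}. of_int (sign p) * (\<Sum>x\<in>UNIV. B$x$(p x) * (\<Prod>y\<in>UNIV-{x}. A$y$(p y) + t0 * B$y$(p y))))) (at t0)"
    by (auto intro!: derivative_eq_intros simp: mult.commute)
  then show ?thesis unfolding det_affine_eq by blast
qed

lemma det_affine_cont: "isCont (\<lambda>t. det (A + t *\<^sub>R B :: real^'n^'n)) t0"
  using det_affine_deriv DERIV_isCont by blast


lemma mv_add: "((A::real^'n^'m) + B) *v x = A *v x + B *v x"
  by (simp add: vec_eq_iff matrix_vector_mult_def sum.distrib algebra_simps)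
lemma mv_diff: "((A::real^'n^'m) - B) *v x = A *v x - B *v x"
  by (simp add: vec_eq_iff matrix_vector_mult_def sum_subtractf algebra_simps)
lemma mv_scale: "((c *\<^sub>R A)::real^'n^'m) *v x = c *\<^sub>R (A *v x)"
  by (simp add: vec_eq_iff matrix_vector_mult_def sum_distrib_left algebra_simps)

lemma mm_add_r: "((A::real^'n^'m) + B) ** C = A ** C + B ** C"
  by (simp add: vec_eq_iff matrix_matrix_mult_def sum.distrib algebra_simps)
lemma mm_diff_r: "((A::real^'n^'m) - B) ** C = A ** C - B ** C"
  by (simp add: vec_eq_iff matrix_matrix_mult_def sum_subtractf algebra_simps)
lemma mm_diff_l: "(C::real^'n^'m) ** (A - B) = C ** A - C ** B"
  by (simp add: vec_eq_iff matrix_matrix_mult_def sum_subtractf algebra_simps)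
lemma mm_add_l: "(C::real^'n^'m) ** (A + B) = C ** A + C ** B"
  by (simp add: vec_eq_iff matrix_matrix_mult_def sum.distrib algebra_simps)

lemma transpose_add': "transpose ((A::real^'n^'m) + B) = transpose A + transpose B"
  by (simp add: vec_eq_iff transpose_def)
lemma transpose_diff': "transpose ((A::real^'n^'m) - B) = transpose A - transpose B"
  by (simp add: vec_eq_iff transpose_def)
lemma transpose_scale': "transpose ((c *\<^sub>R A)::real^'n^'m) = c *\<^sub>R transpose A"
  by (simp add: vec_eq_iff transpose_def)

lemma pd_add_psd:
  assumes "pd_mat A" "transpose B = B" "\<And>x. x \<bullet> (B *v x) \<ge> 0"
  shows "pd_mat (A + B)"
  using assms unfolding pd_mat_def sym_mat_def
  by (auto simp: mv_add inner_add_right transpose_add' intro: add_pos_nonneg)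

lemma pd_comb:
  assumes "pd_mat A" "pd_mat B" "0 \<le> s" "s \<le> 1"
  shows "pd_mat ((1 - s) *\<^sub>R A + s *\<^sub>R B)"
proof -
  have sA: "transpose A = A" and sB: "transpose B = B" using assms by (auto simp: pd_mat_def sym_mat_def)
  show ?thesis unfolding pd_mat_def sym_mat_def
  proof (intro conjI allI impI)
    show "transpose ((1 - s) *\<^sub>R A + s *\<^sub>R B) = (1 - s) *\<^sub>R A + s *\<^sub>R B"
      by (simp add: transpose_add' transpose_scale' sA sB)
  next
    fix x :: "real^'a" assume x: "x \<noteq> 0"
    have a: "x \<bullet> (A *v x) > 0" "x \<bullet> (B *v x) > 0" using assms x by (auto simp: pd_mat_def)
    have "x \<bullet> (((1 - s) *\<^sub>R A + s *\<^sub>R B) *v x) = (1 - s) * (x \<bullet> (A *v x)) + s * (x \<bullet> (B *v x))"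
      by (simp add: mv_add mv_scale inner_add_right)
    also have "\<dots> > 0"
    proof (cases "s = 0")
      case True then show ?thesis using a by simp
    next
      case False then have "s > 0" using assms by simp
      then show ?thesis using a assms by (intro add_nonneg_pos) auto
    qed
    finally show "x \<bullet> (((1 - s) *\<^sub>R A + s *\<^sub>R B) *v x) > 0" .
  qed
qed

lemma pd_I: "pd_mat (mat 1 :: real^'n^'n)"
  by (auto simp: pd_mat_def sym_mat_def transpose_mat)

lemma pd_det_nz: "pd_mat A \<Longrightarrow> det A \<noteq> 0"
  using pd_invertible invertible_det_nz by blast

lemma pd_det_pos:
  assumes "pd_mat (A::real^'n^'n)"
  shows "det A > 0"
proof (rule ccontr)
  assume "\<not> det A > 0"
  then have le: "det A \<le> 0" by simp
  let ?f = "\<lambda>t. det (mat 1 + t *\<^sub>R (A - mat 1) :: real^'n^'n)"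
  have e: "mat 1 + t *\<^sub>R (A - mat 1) = (1 - t) *\<^sub>R mat 1 + t *\<^sub>R A" for t :: real
    by (simp add: algebra_simps)
  have "\<exists>t. 0 \<le> t \<and> t \<le> 1 \<and> ?f t = 0"
    by (rule IVT2) (use le det_affine_cont in auto)
  then obtain t where t: "0 \<le> t" "t \<le> 1" "?f t = 0" by blast
  have "pd_mat ((1 - t) *\<^sub>R mat 1 + t *\<^sub>R A)" by (rule pd_comb[OF pd_I assms t(1,2)])
  then show False using pd_det_nz t(3) e by metis
qed


lemma inverse_unique: "(A::real^'n^'n) ** Z = mat 1 \<Longrightarrow> W ** A = mat 1 \<Longrightarrow> W = Z"
  by (metis matrix_mul_assoc matrix_mul_lid matrix_mul_rid)

lemma pd_inverse:
  assumes "pd_mat (A::real^'n^'n)"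
  shows "\<exists>Z. A ** Z = mat 1 \<and> Z ** A = mat 1 \<and> transpose Z = Z \<and> pd_mat Z"
proof -
  obtain Z where Z: "A ** Z = mat 1" "Z ** A = mat 1"
    using pd_invertible[OF assms] unfolding invertible_def by blast
  have sA: "transpose A = A" using assms pd_sym by blast
  have "transpose Z ** A = mat 1"
    using Z(1) by (metis matrix_transpose_mul sA transpose_mat)
  then have sZ: "transpose Z = Z" using inverse_unique[OF Z(1)] by blast
  have "pd_mat Z" unfolding pd_mat_def sym_mat_def
  proof (intro conjI allI impI sZ)
    fix x :: "real^'n" assume x: "x \<noteq> 0"
    have "Z *v x \<noteq> 0" using x Z(1) by (metis matrix_vector_mul_assoc matrix_vector_mul_lid matrix_vector_mult_0_right)
    then have "(Z *v x) \<bullet> (A *v (Z *v x)) > 0" using assms by (auto simp: pd_mat_def)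
    also have "A *v (Z *v x) = x" by (simp add: matrix_vector_mul_assoc Z(1))
    finally show "x \<bullet> (Z *v x) > 0" by (simp add: inner_commute)
  qed
  with Z sZ show ?thesis by blast
qed

lemma pd_congr:
  fixes P :: "real^'n^'n"
  assumes "pd_mat (A::real^'n^'n)" "invertible P"
  shows "pd_mat (P ** A ** transpose P)"
  unfolding pd_mat_def sym_mat_def
proof (intro conjI allI impI)
  have sA: "transpose A = A" using assms pd_sym by blast
  show "transpose (P ** A ** transpose P) = P ** A ** transpose P"
    by (simp add: matrix_transpose_mul sA matrix_mul_assoc)
next
  fix x :: "real^'n" assume x: "x \<noteq> 0"
  have "transpose P *v x \<noteq> 0"
  proof
    assume h: "transpose P *v x = 0"
    obtain Q where "P ** Q = mat 1" using assms(2) unfolding invertible_def by blast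
    then have "transpose Q ** transpose P = mat 1" by (metis matrix_transpose_mul transpose_mat)
    then have "x = transpose Q *v (transpose P *v x)" by (metis matrix_vector_mul_assoc matrix_vector_mul_lid)
    with h x show False by simp
  qed
  then have "(transpose P *v x) \<bullet> (A *v (transpose P *v x)) > 0" using assms by (auto simp: pd_mat_def)
  then show "x \<bullet> ((P ** A ** transpose P) *v x) > 0"
    by (simp add: inner_mat_transpose[of x P] matrix_vector_mul_assoc[symmetric])
qed

lemma det_G:
  fixes a b :: "real^'n"
  assumes "k \<notin> R"
  shows "det (\<chi> i. if i = k then b else if i \<in> R then axis i 1 + a$i *\<^sub>R b else axis i 1) = b$k"
proof -
  have fin: "finite R" by simp
  from fin assms show ?thesis
  proof (induction R rule: finite_induct)
    case empty
    have s: "(\<Sum>i\<in>UNIV. b$i *s row i (mat 1 :: real^'n^'n)) = b"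
      by (simp add: vec_eq_iff row_def mat_def axis_def if_distrib cong: if_cong)
    have r: "row i (mat 1 :: real^'n^'n) = axis i 1" for i
      by (simp add: vec_eq_iff row_def mat_def axis_def)
    have "det (\<chi> i. if i = k then (\<Sum>i\<in>UNIV. b$i *s row i (mat 1 :: real^'n^'n)) else row i (mat 1 :: real^'n^'n)) = b$k * det (mat 1 :: real^'n^'n)"
      by (rule cramer_lemma_transpose)
    moreover have "(\<chi> i. if i = k then b else if i \<in> {} then axis i 1 + a$i *\<^sub>R b else axis i 1) = (\<chi> i. if i = k then (\<Sum>i\<in>UNIV. b$i *s row i (mat 1 :: real^'n^'n)) else row i (mat 1 :: real^'n^'n))"
    proof -
        have s': "(\<Sum>i\<in>UNIV. b$i *s (axis i 1 :: real^'n)) = b" using s unfolding r .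
        show ?thesis unfolding r s' by (rule arg_cong[where f=vec_lambda]) (auto simp: fun_eq_iff)
      qed
    ultimately show ?case by simp
  next
    case (insert j R)
    have jk: "j \<noteq> k" using insert by auto
    let ?C = "\<lambda>i. if i = k then b else if i \<in> R then axis i 1 + a$i *\<^sub>R b else (axis i 1 :: real^'n)"
    have M: "(\<chi> i. if i = k then b else if i \<in> insert j R then axis i 1 + a$i *\<^sub>R b else axis i 1)
       = (\<chi> i. if i = j then axis j 1 + a$j *s b else ?C i)"
      using jk by (simp add: vec_eq_iff scalar_mult_eq_scaleR)
    have M1: "(\<chi> i. if i = j then axis j 1 else ?C i) = (\<chi> i. ?C i)"
      using jk insert by (simp add: vec_eq_iff)
    have z: "det (\<chi> i. if i = j then b else ?C i) = 0"
      by (rule det_identical_rows[OF jk]) (use jk in \<open>simp add: row_def vec_eq_iff\<close>)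
    have "det (\<chi> i. if i = j then axis j 1 + a$j *s b else ?C i) = det (\<chi> i. if i = j then axis j 1 else ?C i) + det (\<chi> i. if i = j then a$j *s b else ?C i)"
      by (rule det_row_add)
    also have "det (\<chi> i. if i = j then a$j *s b else ?C i) = a$j * det (\<chi> i. if i = j then b else ?C i)"
      by (rule det_row_mul)
    finally have "det (\<chi> i. if i = j then axis j 1 + a$j *s b else ?C i) = det (\<chi> i. ?C i)"
      unfolding M1 z by simp
    then show ?case
      unfolding M using insert.IH insert.prems by simp
  qed
qed

lemma det_F:
  fixes a b :: "real^'n"
  shows "det (\<chi> i. if i \<in> R then axis i 1 + a$i *\<^sub>R b else axis i 1) = 1 + (\<Sum>i\<in>R. a$i * b$i)"
proof -
  have fin: "finite R" by simp
  from fin show ?thesis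
  proof (induction R rule: finite_induct)
    case empty
    have "(\<chi> i. (axis i 1 :: real^'n)) = mat 1" by (simp add: vec_eq_iff mat_def axis_def)
    then show ?case by simp
  next
    case (insert k R)
    let ?C = "\<lambda>i. if i \<in> R then axis i 1 + a$i *\<^sub>R b else (axis i 1 :: real^'n)"
    have M: "(\<chi> i. if i \<in> insert k R then axis i 1 + a$i *\<^sub>R b else axis i 1)
       = (\<chi> i. if i = k then axis k 1 + a$k *s b else ?C i)"
      by (simp add: vec_eq_iff scalar_mult_eq_scaleR)
    have M1: "(\<chi> i. if i = k then axis k 1 else ?C i) = (\<chi> i. ?C i)"
      using insert by (simp add: vec_eq_iff)
    have "det (\<chi> i. if i = k then axis k 1 + a$k *s b else ?C i) = det (\<chi> i. if i = k then axis k 1 else ?C i) + det (\<chi> i. if i = k then a$k *s b else ?C i)"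
      by (rule det_row_add)
    also have "det (\<chi> i. if i = k then a$k *s b else ?C i) = a$k * det (\<chi> i. if i = k then b else ?C i)"
      by (rule det_row_mul)
    finally have "det (\<chi> i. if i = k then axis k 1 + a$k *s b else ?C i) = det (\<chi> i. ?C i) + a$k * b$k"
      unfolding M1 det_G[OF insert(2)] by simp
    then show ?case
      unfolding M using insert by (simp add: algebra_simps)
  qed
qed

lemma det_rank1: "det (mat 1 + (\<chi> j l. a$j * b$l) :: real^'n^'n) = 1 + a \<bullet> b"
proof -
  have "mat 1 + (\<chi> j l. a$j * b$l) = (\<chi> i. if i \<in> UNIV then axis i 1 + a$i *\<^sub>R b else (axis i 1 :: real^'n))"
    by (simp add: vec_eq_iff mat_def axis_def)
  then show ?thesis using det_F[of UNIV a b] by (simp add: inner_vec_def)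
qed


definition outer :: "real^'n \<Rightarrow> real^'n^'n" where
  "outer q = (\<chi> j k. q$j * q$k)"

lemma outer_mv: "outer q *v x = (q \<bullet> x) *\<^sub>R q"
  by (simp add: vec_eq_iff outer_def matrix_vector_mult_def inner_vec_def sum_distrib_left algebra_simps)

lemma outer_qf: "x \<bullet> (outer q *v x) = (q \<bullet> x)^2"
  by (simp add: outer_mv power2_eq_square inner_commute)

lemma outer_sym: "transpose (outer q) = outer q"
  by (simp add: vec_eq_iff outer_def transpose_def mult.commute)

lemma outer_zero: "outer 0 = 0"
  by (simp add: vec_eq_iff outer_def)

lemma det_rank1_update:
  assumes Y: "pd_mat (Y::real^'n^'n)" and Z: "Y ** Z = mat 1"
  shows "det (Y + outer q) = det Y * (1 + (Z *v q) \<bullet> q)"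
proof -
  let ?w = "Z *v q"
  have sY: "transpose Y = Y" using Y pd_sym by blast
  have Yw: "Y *v ?w = q" by (simp add: matrix_vector_mul_assoc Z)
  have Yw': "(\<Sum>l\<in>UNIV. ?w$l * Y$l$k) = q$k" for k
  proof -
    have "(\<Sum>l\<in>UNIV. ?w$l * Y$l$k) = (Y *v ?w)$k"
      using sY by (simp add: matrix_vector_mult_def vec_eq_iff transpose_def mult.commute)
    then show ?thesis using Yw by simp
  qed
  have o: "(\<chi> j l. q$j * ?w$l) ** Y = outer q"
  proof -
    have "(\<Sum>k\<in>UNIV. q$j * ?w$k * Y$k$l) = q$j * q$l" for j l
      by (simp add: mult.assoc sum_distrib_left[symmetric] Yw')
    then show ?thesis by (simp add: vec_eq_iff matrix_matrix_mult_def outer_def)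
  qed
  have "Y + outer q = (mat 1 + (\<chi> j l. q$j * ?w$l)) ** Y"
    by (simp add: mm_add_r o)
  then have "det (Y + outer q) = det (mat 1 + (\<chi> j l. q$j * ?w$l)) * det Y"
    by (simp add: det_mul)
  also have "\<dots> = (1 + q \<bullet> ?w) * det Y" by (simp add: det_rank1)
  finally show ?thesis by (simp add: inner_commute mult.commute)
qed


lemma mv_axis: "(Q *v axis k (1::real)) $ j = Q$j$k"
  by (simp add: matrix_vector_mult_def axis_def if_distrib cong: if_cong)

lemma quad_shift:
  fixes Q :: "real^'n^'n"
  assumes "transpose Q = Q"
  shows "(x + t *\<^sub>R axis k 1) \<bullet> (Q *v (x + t *\<^sub>R axis k 1)) = x \<bullet> (Q *v x) + 2*t*(Q *v x)$k + t^2 * Q$k$k"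
proof -
  have a: "x \<bullet> (Q *v axis k 1) = (Q *v x)$k"
    using inner_mat_transpose[of x Q "axis k 1"] assms by (simp add: inner_axis)
  have b: "axis k 1 \<bullet> (Q *v x) = (Q *v x)$k" by (simp add: inner_axis')
  have c: "axis k 1 \<bullet> (Q *v axis k 1) = Q$k$k" by (simp add: inner_axis' mv_axis)
  have "(x + t *\<^sub>R axis k 1) \<bullet> (Q *v (x + t *\<^sub>R axis k 1)) =
     x \<bullet> (Q *v x) + t * (x \<bullet> (Q *v axis k 1)) + t * (axis k 1 \<bullet> (Q *v x)) + t*t*(axis k 1 \<bullet> (Q *v axis k 1))"
    by (simp add: matrix_vector_right_distrib inner_add_left inner_add_right algebra_simps
        scaleR_matrix_vector_assoc[symmetric])
  then show ?thesis using a b c by (simp add: power2_eq_square algebra_simps)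
qed

lemma aux_quad_pos:
  fixes a b c :: real
  assumes "c > 0" "\<And>t. 0 \<le> a + 2*t*b + t^2 * c"
  shows "b^2 \<le> c * a"
proof -
  have "0 \<le> a + 2*(-b/c)*b + (-b/c)^2 * c" by (rule assms(2))
  also have "\<dots> = (c * a - b^2) / c" using assms(1) by (simp add: field_simps power2_eq_square)
  finally show ?thesis using assms(1) by (simp add: zero_le_divide_iff)
qed

lemma aux_quad_zero:
  fixes a b :: real
  assumes "\<And>t. 0 \<le> a + 2*t*b"
  shows "b = 0"
proof (rule ccontr)
  assume ne: "b \<noteq> 0"
  have "0 \<le> a + 2*(-(a+1)/(2*b))*b" by (rule assms)
  also have "\<dots> = -1" using ne by (simp add: field_simps)
  finally show False by simp
qed

lemma psd_cs:
  fixes Q :: "real^'n^'n"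
  assumes "psd_mat Q"
  shows "((Q *v x)$k)^2 \<le> Q$k$k * (x \<bullet> (Q *v x))"
proof -
  have sQ: "transpose Q = Q" using assms by (simp add: psd_mat_def sym_mat_def)
  have nn: "\<And>y. y \<bullet> (Q *v y) \<ge> 0" using assms by (simp add: psd_mat_def)
  have q: "0 \<le> x \<bullet> (Q *v x) + 2*t*(Q *v x)$k + t^2 * Q$k$k" for t
    using nn[of "x + t *\<^sub>R axis k 1"] quad_shift[OF sQ] by simp
  have kk: "Q$k$k \<ge> 0" using nn[of "axis k 1"] by (simp add: inner_axis' mv_axis)
  show ?thesis
  proof (cases "Q$k$k = 0")
    case True
    have "(Q *v x)$k = 0"
      by (rule aux_quad_zero[of "x \<bullet> (Q *v x)"]) (use q True in simp)
    then show ?thesis using True by simp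
  next
    case False
    then have pos: "Q$k$k > 0" using kk by simp
    show ?thesis by (rule aux_quad_pos[OF pos q])
  qed
qed

lemma psd_zero_diag:
  assumes "psd_mat (Q::real^'n^'n)" "Q$j$j = 0"
  shows "Q$j$k = 0"
proof -
  have "((Q *v axis k 1)$j)^2 \<le> Q$j$j * (axis k 1 \<bullet> (Q *v axis k 1))"
    by (rule psd_cs[OF assms(1)])
  then show ?thesis using assms(2) by (simp add: mv_axis)
qed

lemma psd_decomp:
  "psd_mat (Q::real^'n^'n) \<Longrightarrow> \<exists>qs. Q = sum_list (map outer qs)"
proof (induction "card {j. Q$j$j \<noteq> 0}" arbitrary: Q rule: less_induct)
  case less
  have sQ: "transpose Q = Q" using less.prems by (simp add: psd_mat_def sym_mat_def)
  show ?case
  proof (cases "\<forall>k. Q$k$k = 0")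
    case True
    then have "Q = 0" using psd_zero_diag[OF less.prems] by (simp add: vec_eq_iff)
    then show ?thesis by (intro exI[of _ "[]"]) simp
  next
    case False
    then obtain k where k: "Q$k$k \<noteq> 0" by blast
    have "axis k 1 \<bullet> (Q *v axis k 1) \<ge> 0" using less.prems by (simp add: psd_mat_def)
    then have kk: "Q$k$k \<ge> 0" by (simp add: inner_axis' mv_axis)
    then have pos: "Q$k$k > 0" using k by simp
    define q where "q = (\<chi> j. Q$j$k / sqrt (Q$k$k))"
    define Q' where "Q' = Q - outer q"
    have Qkj: "Q$k$j = Q$j$k" for j using sQ by (metis transpose_def vec_lambda_beta)
    have qx: "q \<bullet> x = (Q *v x)$k / sqrt (Q$k$k)" for x
    proof -
      have "q \<bullet> x = (\<Sum>j\<in>UNIV. Q$j$k * x$j) / sqrt (Q$k$k)"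
        by (simp add: q_def inner_vec_def sum_divide_distrib)
      also have "(\<Sum>j\<in>UNIV. Q$j$k * x$j) = (Q *v x)$k"
        unfolding matrix_vector_mult_def by (simp add: Qkj[symmetric])
      finally show ?thesis .
    qed
    have psd': "psd_mat Q'"
      unfolding psd_mat_def sym_mat_def
    proof (intro conjI allI)
      show "transpose Q' = Q'" by (simp add: Q'_def transpose_diff' outer_sym sQ)
    next
      fix x :: "real^'n"
      have "x \<bullet> (Q' *v x) = x \<bullet> (Q *v x) - (q \<bullet> x)^2"
        by (simp add: Q'_def mv_diff inner_diff_right outer_qf)
      also have "(q \<bullet> x)^2 = ((Q *v x)$k)^2 / Q$k$k"
        using pos by (simp add: qx power_divide)
      finally have e: "x \<bullet> (Q' *v x) = x \<bullet> (Q *v x) - ((Q *v x)$k)^2 / Q$k$k" .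
      have "((Q *v x)$k)^2 / Q$k$k \<le> x \<bullet> (Q *v x)"
        using psd_cs[OF less.prems, of x k] pos by (simp add: divide_le_eq mult.commute)
      then show "x \<bullet> (Q' *v x) \<ge> 0" using e by linarith
    qed
    have Q'jj: "Q'$j$j = Q$j$j - (Q$j$k)^2 / Q$k$k" for j
      using pos by (simp add: Q'_def outer_def q_def power2_eq_square real_sqrt_mult[symmetric])
    have sub: "{j. Q'$j$j \<noteq> 0} \<subseteq> {j. Q$j$j \<noteq> 0} - {k}"
    proof
      fix j assume "j \<in> {j. Q'$j$j \<noteq> 0}"
      then have j: "Q'$j$j \<noteq> 0" by simp
      have "Q$j$j \<noteq> 0"
        using j psd_zero_diag[OF less.prems, of j k] Q'jj[of j] by auto
      moreover have "j \<noteq> k" using j Q'jj[of k] pos by (auto simp: power2_eq_square)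
      ultimately show "j \<in> {j. Q$j$j \<noteq> 0} - {k}" by simp
    qed
    have "card {j. Q'$j$j \<noteq> 0} < card {j. Q$j$j \<noteq> 0}"
    proof (rule le_less_trans[OF card_mono[OF _ sub]])
      show "card ({j. Q$j$j \<noteq> 0} - {k}) < card {j. Q$j$j \<noteq> 0}"
        by (rule card_Diff1_less) (use k in auto)
    qed simp
    then obtain qs where "Q' = sum_list (map outer qs)" using less.hyps psd' by blast
    then have "Q = sum_list (map outer (q # qs))" by (simp add: Q'_def algebra_simps)
    then show ?thesis by blast
  qed
qed


lemma det_mono_list:
  "pd_mat (Y::real^'n^'n) \<Longrightarrow> det Y \<le> det (Y + sum_list (map outer qs)) \<and>
     (det Y = det (Y + sum_list (map outer qs)) \<longrightarrow> sum_list (map outer qs) = 0)"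
proof (induction qs arbitrary: Y)
  case Nil
  then show ?case by simp
next
  case (Cons q qs)
  let ?Y1 = "Y + outer q"
  have pd1: "pd_mat ?Y1"
    by (rule pd_add_psd[OF Cons.prems outer_sym]) (simp add: outer_qf)
  obtain Z where Z: "Y ** Z = mat 1" "pd_mat Z" using pd_inverse[OF Cons.prems] by blast
  have d1: "det ?Y1 = det Y * (1 + (Z *v q) \<bullet> q)" by (rule det_rank1_update[OF Cons.prems Z(1)])
  have dY: "det Y > 0" by (rule pd_det_pos[OF Cons.prems])
  have zq0: "q \<noteq> 0 \<Longrightarrow> (Z *v q) \<bullet> q > 0"
    using Z(2) unfolding pd_mat_def by (simp add: inner_commute)
  have zq: "(Z *v q) \<bullet> q \<ge> 0"
    using zq0 by (cases "q = 0") (simp_all add: less_imp_le)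
  have le1: "det Y \<le> det ?Y1" using d1 dY zq by (simp add: mult_le_cancel_left1)
  have eq1: "det Y = det ?Y1 \<Longrightarrow> q = 0"
  proof (rule ccontr)
    assume e: "det Y = det ?Y1" and "q \<noteq> 0"
    then have "(Z *v q) \<bullet> q > 0" using zq0 by blast
    then have "det ?Y1 > det Y" using d1 dY by simp
    with e show False by simp
  qed
  have IH: "det ?Y1 \<le> det (?Y1 + sum_list (map outer qs)) \<and>
     (det ?Y1 = det (?Y1 + sum_list (map outer qs)) \<longrightarrow> sum_list (map outer qs) = 0)"
    by (rule Cons.IH[OF pd1])
  have assoc: "Y + sum_list (map outer (q # qs)) = ?Y1 + sum_list (map outer qs)"
    by (simp add: algebra_simps)
  show ?case
  proof (intro conjI impI)
    show "det Y \<le> det (Y + sum_list (map outer (q # qs)))" unfolding assoc using le1 IH by linarith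
  next
    assume "det Y = det (Y + sum_list (map outer (q # qs)))"
    then have "det Y = det ?Y1" and "det ?Y1 = det (?Y1 + sum_list (map outer qs))"
      unfolding assoc using le1 IH by linarith+
    then show "sum_list (map outer (q # qs)) = 0" using eq1 IH by (simp add: outer_zero)
  qed
qed

lemma det_mono:
  assumes "pd_mat (Y::real^'n^'n)" "psd_mat M"
  shows "det Y \<le> det (Y + M) \<and> (det Y = det (Y + M) \<longrightarrow> M = 0)"
  using psd_decomp[OF assms(2)] det_mono_list[OF assms(1)] by metis


definition sg :: "'n set \<Rightarrow> 'n \<Rightarrow> real" where "sg G j = (if j \<in> G then 1 else -1)"
definition Dm :: "'n set \<Rightarrow> real^'n^'n" where "Dm G = (\<chi> j k. if j = k then sg G j else 0)"
definition bd :: "'n set \<Rightarrow> real^'n^'n \<Rightarrow> real^'n^'n" where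
  "bd G A = (\<chi> j k. if (j \<in> G) = (k \<in> G) then A$j$k else 0)"
definition lw :: "'n set \<Rightarrow> real^'n^'n \<Rightarrow> real^'n^'n" where
  "lw G A = (\<chi> j k. if j \<notin> G \<and> k \<in> G then A$j$k else 0)"
definition up :: "'n set \<Rightarrow> real^'n^'n \<Rightarrow> real^'n^'n" where
  "up G A = (\<chi> j k. if j \<in> G \<and> k \<notin> G then A$j$k else 0)"

lemma Dm_left: "(Dm G ** A) $ j $ k = sg G j * A$j$k"
proof -
  have "(\<lambda>m. (if j = m then sg G j else 0) * A$m$k) = (\<lambda>m. if m = j then sg G j * A$j$k else 0)"
    by auto
  note e = this
  show ?thesis unfolding Dm_def matrix_matrix_mult_def vec_lambda_beta e by simp
qed
lemma Dm_right: "(A ** Dm G) $ j $ k = A$j$k * sg G k"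
proof -
  have "(\<lambda>m. A$j$m * (if m = k then sg G m else 0)) = (\<lambda>m. if m = k then A$j$k * sg G k else 0)"
    by auto
  note e = this
  show ?thesis unfolding Dm_def matrix_matrix_mult_def vec_lambda_beta e by simp
qed
lemma Dm_conj: "(Dm G ** A ** Dm G) $ j $ k = sg G j * sg G k * A$j$k"
  by (simp add: Dm_left Dm_right)
lemma sg_sq: "sg G j * sg G j = 1" by (simp add: sg_def)
lemma Dm_sq: "Dm G ** Dm G = mat 1"
  unfolding vec_eq_iff Dm_left by (simp add: mat_def Dm_def sg_sq)
lemma Dm_sym: "transpose (Dm G) = Dm G"
  by (simp add: vec_eq_iff Dm_def transpose_def)
lemma det_Dm_conj: "det (Dm G ** A ** Dm G) = det A"
proof -
  have "det (Dm G) * det (Dm G) = 1" using Dm_sq[of G] det_mul by (metis det_I)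
  then show ?thesis by (simp add: det_mul)
qed
lemma Dm_invertible: "invertible (Dm G)"
  unfolding invertible_def using Dm_sq by blast

lemma bd_eq: "bd G A = (1 - 1/2) *\<^sub>R A + (1/2) *\<^sub>R (Dm G ** A ** transpose (Dm G))"
  by (simp add: vec_eq_iff bd_def Dm_sym Dm_conj sg_def)

lemma pd_bd: "pd_mat A \<Longrightarrow> pd_mat (bd G A)"
  unfolding bd_eq by (rule pd_comb) (auto intro: pd_congr Dm_invertible)

lemma decomp3: "A = bd G A + lw G A + up G A"
  by (simp add: vec_eq_iff bd_def lw_def up_def)

lemma up_lw: "transpose A = A \<Longrightarrow> up G A = transpose (lw G A)"
  by (auto simp: vec_eq_iff up_def lw_def transpose_def)

lemma bd_Dm: "Dm G ** bd G A ** Dm G = bd G A"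
  by (simp add: vec_eq_iff bd_def Dm_conj sg_def)
lemma lw_Dm: "Dm G ** lw G A ** Dm G = - lw G A"
  by (simp add: vec_eq_iff lw_def Dm_conj sg_def)

lemma zero3:
  fixes X W Y :: "real^'n^'n"
  assumes "\<And>j a. X$j$a \<noteq> 0 \<Longrightarrow> P a" "\<And>a b. W$a$b \<noteq> 0 \<Longrightarrow> P a \<Longrightarrow> P b"
    "\<And>b k. Y$b$k \<noteq> 0 \<Longrightarrow> \<not> P b"
  shows "X ** W ** Y = 0"
proof -
  have xw: "(X ** W)$j$b = 0" if "\<not> P b" for j b
    unfolding matrix_matrix_mult_def using assms(1,2) that
    by (auto intro!: sum.neutral) (metis mult_eq_0_iff)
  have "((X ** W) ** Y)$j$k = 0" for j k
    unfolding matrix_matrix_mult_def[of "X ** W" Y]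
  proof (simp, rule sum.neutral, intro ballI)
    fix b assume "b \<in> (UNIV::'n set)"
    show "(X ** W)$j$b * Y$b$k = 0"
      using xw[of b j] assms(3)[of b k] by (cases "P b") auto
  qed
  then show ?thesis by (simp add: vec_eq_iff)
qed


lemma mm_neg_l: "(- (X::real^'n^'m)) ** Y = - (X ** Y)"
  by (simp add: vec_eq_iff matrix_matrix_mult_def sum_negf)

lemma fischer:
  fixes A :: "real^'n^'n"
  assumes pdA: "pd_mat A"
  shows "det A \<le> det (bd G A) \<and> (det A = det (bd G A) \<longrightarrow> (\<forall>j k. j \<in> G \<longrightarrow> k \<notin> G \<longrightarrow> A$j$k = 0))"
proof -
  let ?B = "bd G A" let ?L = "lw G A" let ?U = "up G A" let ?D = "Dm G"
  have sA: "transpose A = A" using pdA pd_sym by blast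
  have UL: "?U = transpose ?L" using up_lw[OF sA] .
  have LU: "?L = transpose ?U" using UL by simp
  have pdB: "pd_mat ?B" using pd_bd[OF pdA] .
  obtain Z where Z: "?B ** Z = mat 1" "Z ** ?B = mat 1" "transpose Z = Z" "pd_mat Z"
    using pd_inverse[OF pdB] by blast
  have "(?D ** Z ** ?D) ** ?B = (?D ** Z ** ?D) ** (?D ** ?B ** ?D)" using bd_Dm[of G A] by simp
  also have "\<dots> = ?D ** Z ** (?D ** ?D) ** ?B ** ?D" by (simp add: matrix_mul_assoc)
  also have "\<dots> = ?D ** (Z ** ?B) ** ?D" by (simp add: Dm_sq matrix_mul_assoc)
  also have "\<dots> = mat 1" by (simp add: Z Dm_sq)
  finally have ZD: "?D ** Z ** ?D = Z" using inverse_unique[OF Z(1)] by blast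
  have Zbd: "Z$a$b = 0" if "(a \<in> G) \<noteq> (b \<in> G)" for a b
  proof -
    have "sg G a * sg G b * Z$a$b = Z$a$b" using ZD Dm_conj by metis
    moreover have "sg G a * sg G b = -1" using that by (auto simp: sg_def)
    ultimately show ?thesis by simp
  qed
  have LZL: "?L ** Z ** ?L = 0"
    by (rule zero3[where P="\<lambda>a. a \<in> G"]) (auto simp: lw_def split: if_splits, metis Zbd)
  have UZU: "?U ** Z ** ?U = 0"
    by (rule zero3[where P="\<lambda>a. a \<notin> G"]) (auto simp: up_def split: if_splits, metis Zbd)
  have LZB: "?L ** Z ** ?B = ?L" by (simp add: Z(2) matrix_mul_assoc[symmetric])
  have BZU: "?B ** Z ** ?U = ?U" by (simp add: Z(1))
  let ?N = "?L ** Z"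
  have NN: "?N ** ?N = 0" by (simp add: matrix_mul_assoc LZL)
  have DLD: "?D ** ?L ** ?D = - ?L" by (rule lw_Dm)
  have DND: "?D ** ?N ** ?D = - ?N"
  proof -
    have "?D ** ?N ** ?D = (?D ** ?L ** ?D) ** (?D ** Z ** ?D)"
      by (simp add: matrix_mul_assoc Dm_sq) (simp add: matrix_mul_assoc[symmetric] Dm_sq)
    also have "\<dots> = - ?N" by (simp add: DLD ZD mm_neg_l)
    finally show ?thesis .
  qed
  let ?P = "mat 1 - ?N"
  have PQ: "?P ** (mat 1 + ?N) = mat 1"
    by (simp add: mm_diff_r mm_add_l NN)
  have DPD: "?D ** ?P ** ?D = mat 1 + ?N"
  proof -
    have "?D ** ?P ** ?D = (?D ** mat 1 - ?D ** ?N) ** ?D" by (simp only: mm_diff_l)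
    also have "\<dots> = ?D ** ?D - ?D ** ?N ** ?D" by (simp only: mm_diff_r matrix_mul_rid)
    also have "\<dots> = mat 1 + ?N" by (simp only: DND Dm_sq) simp
    finally show ?thesis .
  qed
  have detP: "det ?P * det ?P = 1"
  proof -
    have "det ?P * det (mat 1 + ?N) = 1" using PQ det_mul by (metis det_I)
    moreover have "det (mat 1 + ?N) = det ?P" using DPD det_Dm_conj by metis
    ultimately show ?thesis by simp
  qed
  have PT: "transpose ?P = mat 1 - Z ** ?U"
    by (simp add: transpose_diff' matrix_transpose_mul Z(3) UL)
  let ?M = "?L ** Z ** ?U"
  have A3: "A = ?B + ?L + ?U" by (rule decomp3)
  have NA: "?N ** A = ?L + ?M"
  proof -
    have "?N ** A = ?N ** ?B + ?N ** ?L + ?N ** ?U" by (subst A3) (simp add: mm_add_l)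
    also have "\<dots> = ?L + ?M" by (simp add: LZB LZL)
    finally show ?thesis .
  qed
  have PA: "?P ** A = ?B + ?U - ?M"
  proof -
    have "?P ** A = A - ?N ** A" by (simp add: mm_diff_r)
    also have "\<dots> = ?B + ?U - ?M" by (subst (1) A3) (simp add: NA algebra_simps)
    finally show ?thesis .
  qed
  have MZU: "?M ** Z ** ?U = 0"
  proof -
    have "?M ** Z ** ?U = ?N ** (?U ** Z ** ?U)" by (simp add: matrix_mul_assoc)
    then show ?thesis by (simp add: UZU)
  qed
  have main: "?P ** A ** transpose ?P = ?B - ?M"
  proof -
    have "?P ** A ** transpose ?P = (?B + ?U - ?M) - (?B + ?U - ?M) ** Z ** ?U"
      unfolding PA PT by (simp add: mm_diff_l matrix_mul_assoc)
    also have "(?B + ?U - ?M) ** Z ** ?U = ?B ** Z ** ?U + ?U ** Z ** ?U - ?M ** Z ** ?U"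
      by (simp add: mm_add_r mm_diff_r)
    also have "\<dots> = ?U" by (simp only: BZU UZU MZU) simp
    finally show ?thesis by simp
  qed
  have qM: "x \<bullet> (?M *v x) = (?U *v x) \<bullet> (Z *v (?U *v x))" for x
    by (simp add: matrix_vector_mul_assoc[symmetric] inner_mat_transpose[of x ?L] UL)
  have psdM: "psd_mat ?M"
    unfolding psd_mat_def sym_mat_def
  proof (intro conjI allI)
    show "transpose ?M = ?M" by (simp add: matrix_transpose_mul Z(3) UL matrix_mul_assoc)
  next
    fix x :: "real^'n"
    show "x \<bullet> (?M *v x) \<ge> 0"
      unfolding qM using Z(4) unfolding pd_mat_def
      by (cases "?U *v x = 0") (auto simp: less_imp_le)
  qed
  have invP: "invertible ?P" using detP invertible_det_nz by force
  have pdY: "pd_mat (?B - ?M)" using pd_congr[OF pdA invP] main by simp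
  have dY: "det (?B - ?M) = det A"
  proof -
    have "det (?B - ?M) = det ?P * det A * det (transpose ?P)" by (simp add: main[symmetric] det_mul)
    also have "\<dots> = det A" using detP by (simp add: det_transpose algebra_simps)
    finally show ?thesis .
  qed
  have dm: "det (?B - ?M) \<le> det (?B - ?M + ?M) \<and> (det (?B - ?M) = det (?B - ?M + ?M) \<longrightarrow> ?M = 0)"
    by (rule det_mono[OF pdY psdM])
  show ?thesis
  proof (intro conjI impI allI)
    show "det A \<le> det ?B" using dm dY by simp
  next
    fix j k assume e: "det A = det ?B" and jk: "j \<in> G" "k \<notin> G"
    then have M0: "?M = 0" using dm dY by simp
    have "?U *v x = 0" for x
    proof (rule ccontr)
      assume "?U *v x \<noteq> 0"
      then have "(?U *v x) \<bullet> (Z *v (?U *v x)) > 0" using Z(4) unfolding pd_mat_def by blast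
      then show False using qM[of x] M0 by simp
    qed
    then have "(?U *v axis k 1)$j = 0" by simp
    then show "A$j$k = 0" using jk by (simp add: mv_axis up_def)
  qed
qed


lemma pair_ineq:
  fixes a b :: "'i \<Rightarrow> real"
  assumes "finite N" "card N > 0" "lam > 0" "(1 / real (card N)) * (\<Sum>i\<in>N. (b i)^2) \<le> lam^2"
  shows "(1 / sqrt (real (card N))) * (\<Sum>i\<in>N. a i * b i) + lam * sqrt (\<Sum>i\<in>N. (a i)^2) \<ge> 0"
proof -
  let ?n = "real (card N)"
  have n: "?n > 0" using assms(2) by simp
  have cs: "\<bar>\<Sum>i\<in>N. a i * b i\<bar> \<le> sqrt (\<Sum>i\<in>N. (a i)^2) * sqrt (\<Sum>i\<in>N. (b i)^2)"
  proof -
    have "\<bar>\<Sum>i\<in>N. a i * b i\<bar> \<le> (\<Sum>i\<in>N. \<bar>a i\<bar> * \<bar>b i\<bar>)"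
      by (rule order_trans[OF sum_abs]) (simp add: abs_mult)
    also have "\<dots> \<le> L2_set a N * L2_set b N" by (rule L2_set_mult_ineq)
    finally show ?thesis by (simp add: L2_set_def)
  qed
  have "(\<Sum>i\<in>N. (b i)^2) \<le> ?n * lam^2" using assms(4) n by (simp add: field_simps)
  then have "sqrt (\<Sum>i\<in>N. (b i)^2) \<le> sqrt ?n * lam"
    using assms(3) by (metis real_sqrt_le_mono real_sqrt_mult real_sqrt_pow2_iff real_sqrt_abs abs_of_pos power2_eq_square
        real_sqrt_mult_self)
  then have "sqrt (\<Sum>i\<in>N. (a i)^2) * sqrt (\<Sum>i\<in>N. (b i)^2) \<le> sqrt (\<Sum>i\<in>N. (a i)^2) * (sqrt ?n * lam)"
    by (rule mult_left_mono) (simp_all add: sum_nonneg)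
  with cs have "\<bar>\<Sum>i\<in>N. a i * b i\<bar> \<le> sqrt ?n * (lam * sqrt (\<Sum>i\<in>N. (a i)^2))" by (simp add: algebra_simps)
  then have "\<bar>\<Sum>i\<in>N. a i * b i\<bar> / sqrt ?n \<le> lam * sqrt (\<Sum>i\<in>N. (a i)^2)"
    using n by (simp add: divide_le_eq mult.commute)
  moreover have "- \<bar>\<Sum>i\<in>N. a i * b i\<bar> / sqrt ?n \<le> (\<Sum>i\<in>N. a i * b i) / sqrt ?n"
    by (rule divide_right_mono) auto
  ultimately show ?thesis by simp
qed

lemma trace_expand: "trace ((X::real^'n^'n) ** S) = (\<Sum>u\<in>UNIV. \<Sum>v\<in>UNIV. X$u$v * S$v$u)"
  by (simp add: trace_def matrix_matrix_mult_def)

lemma sum_offdiag: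
  fixes f :: "'n::finite \<Rightarrow> 'n \<Rightarrow> real"
  assumes "\<And>u. f u u = 0"
  shows "(\<Sum>u\<in>UNIV. \<Sum>v\<in>UNIV. f u v) = (\<Sum>u\<in>UNIV. \<Sum>v\<in>UNIV - {u}. f u v)"
  by (rule sum.cong) (simp_all add: sum_diff1 assms)



lemma sum_lin2: "(\<Sum>x\<in>A. c * f x + d * g x) = c * sum f A + d * sum g A"
  for c d :: real
  by (simp add: sum.distrib sum_distrib_left)

lemma back_dir:
  fixes N :: "'i set" and S Omh :: "'i \<Rightarrow> real^'p::finite^'p" and lam :: real and G :: "'p set"
  assumes finN: "finite N" and neN: "N \<noteq> {}"
    and psdS: "\<forall>i\<in>N. psd_mat (S i)" and lam: "lam > 0"
    and mini: "is_minimizer N S lam Omh"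
    and cond: "\<And>u v. (u \<in> G) \<noteq> (v \<in> G) \<Longrightarrow> (1 / real (card N)) * (\<Sum>i\<in>N. (S i $ v $ u)\<^sup>2) \<le> lam\<^sup>2"
  shows "\<forall>i\<in>N. \<forall>u\<in>G. \<forall>v. v \<notin> G \<longrightarrow> Omh i $ u $ v = 0"
proof -
  define Om' where "Om' = (\<lambda>i. bd G (Omh i))"
  define c where "c = 1 / sqrt (real (card N))"
  have cardpos: "card N > 0" using finN neN by (simp add: card_gt_0_iff)
  have cpos: "c > 0" using cardpos by (simp add: c_def)
  have pdO: "\<forall>i\<in>N. pd_mat (Omh i)" using mini by (simp add: is_minimizer_def)
  have pdO': "\<forall>i\<in>N. pd_mat (Om' i)" using pdO by (simp add: Om'_def pd_bd)
  have le: "L_obj N S lam Omh \<le> L_obj N S lam Om'" using mini pdO' by (simp add: is_minimizer_def)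
  define K where "K = (\<lambda>i u v. if (u \<in> G) = (v \<in> G) then 0 else Omh i $ u $ v)"
  define T where "T = (\<lambda>u v. c * (\<Sum>i\<in>N. K i u v * S i $ v $ u) +
      lam * (sqrt (\<Sum>i\<in>N. (Omh i $ u $ v)\<^sup>2) - sqrt (\<Sum>i\<in>N. (Om' i $ u $ v)\<^sup>2)))"
  have Tnn: "T u v \<ge> 0" for u v
  proof (cases "(u \<in> G) = (v \<in> G)")
    case True
    then show ?thesis by (simp add: T_def K_def Om'_def bd_def)
  next
    case False
    have "c * (\<Sum>i\<in>N. Omh i $ u $ v * S i $ v $ u) + lam * sqrt (\<Sum>i\<in>N. (Omh i $ u $ v)\<^sup>2) \<ge> 0"
      unfolding c_def by (rule pair_ineq[OF finN cardpos lam cond[OF False]])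
    then show ?thesis using False by (simp add: T_def K_def Om'_def bd_def)
  qed
  have trdiff: "trace (Omh i ** S i) - trace (Om' i ** S i) = (\<Sum>u\<in>UNIV. \<Sum>v\<in>UNIV - {u}. K i u v * S i $ v $ u)" for i
  proof -
    have "trace (Omh i ** S i) - trace (Om' i ** S i) = (\<Sum>u\<in>UNIV. \<Sum>v\<in>UNIV. K i u v * S i $ v $ u)"
      unfolding trace_expand sum_subtractf[symmetric]
      by (rule sum.cong[OF refl], rule sum.cong[OF refl]) (simp add: K_def Om'_def bd_def algebra_simps)
    also have "\<dots> = (\<Sum>u\<in>UNIV. \<Sum>v\<in>UNIV - {u}. K i u v * S i $ v $ u)"
      by (rule sum_offdiag) (simp add: K_def)
    finally show ?thesis .
  qed
  have "L_obj N S lam Omh - L_obj N S lam Om' =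
      c * (\<Sum>i\<in>N. (trace (Omh i ** S i) - trace (Om' i ** S i)) + (ln (det (Om' i)) - ln (det (Omh i))))
      + lam * (\<Sum>u\<in>UNIV. \<Sum>v\<in>UNIV - {u}. sqrt (\<Sum>i\<in>N. (Omh i $ u $ v)\<^sup>2) - sqrt (\<Sum>i\<in>N. (Om' i $ u $ v)\<^sup>2))"
  proof -
    have A: "(\<Sum>i\<in>N. trace (Omh i ** S i) - ln (det (Omh i))) - (\<Sum>i\<in>N. trace (Om' i ** S i) - ln (det (Om' i)))
       = (\<Sum>i\<in>N. (trace (Omh i ** S i) - trace (Om' i ** S i)) + (ln (det (Om' i)) - ln (det (Omh i))))"
      unfolding sum_subtractf[symmetric] by (rule sum.cong) auto
    have P: "(\<Sum>u\<in>UNIV. \<Sum>v\<in>UNIV - {u}. sqrt (\<Sum>i\<in>N. (Omh i $ u $ v)\<^sup>2)) - (\<Sum>u\<in>UNIV. \<Sum>v\<in>UNIV - {u}. sqrt (\<Sum>i\<in>N. (Om' i $ u $ v)\<^sup>2))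
       = (\<Sum>u\<in>UNIV. \<Sum>v\<in>UNIV - {u}. sqrt (\<Sum>i\<in>N. (Omh i $ u $ v)\<^sup>2) - sqrt (\<Sum>i\<in>N. (Om' i $ u $ v)\<^sup>2))"
      by (simp add: sum_subtractf)
    show ?thesis unfolding L_obj_def c_def[symmetric] A[symmetric] P[symmetric] by (simp add: algebra_simps)
  qed
  also have "\<dots> = c * (\<Sum>i\<in>N. ln (det (Om' i)) - ln (det (Omh i))) + (\<Sum>u\<in>UNIV. \<Sum>v\<in>UNIV - {u}. T u v)"
  proof -
    have sw: "(\<Sum>i\<in>N. (trace (Omh i ** S i) - trace (Om' i ** S i))) =
        (\<Sum>u\<in>UNIV. \<Sum>v\<in>UNIV - {u}. \<Sum>i\<in>N. K i u v * S i $ v $ u)"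
      unfolding trdiff
      apply (subst sum.swap)
      apply (rule sum.cong[OF refl])
      apply (subst sum.swap)
      apply (rule refl)
      done
    have T1: "(\<Sum>u\<in>UNIV. \<Sum>v\<in>UNIV - {u}. T u v) =
      c * (\<Sum>u\<in>UNIV. \<Sum>v\<in>UNIV - {u}. \<Sum>i\<in>N. K i u v * S i $ v $ u) +
      lam * (\<Sum>u\<in>UNIV. \<Sum>v\<in>UNIV - {u}. sqrt (\<Sum>i\<in>N. (Omh i $ u $ v)\<^sup>2) - sqrt (\<Sum>i\<in>N. (Om' i $ u $ v)\<^sup>2))"
    proof -
      have a: "(\<Sum>v\<in>UNIV - {u}. T u v) = c * (\<Sum>v\<in>UNIV - {u}. \<Sum>i\<in>N. K i u v * S i $ v $ u) +
          lam * (\<Sum>v\<in>UNIV - {u}. sqrt (\<Sum>i\<in>N. (Omh i $ u $ v)\<^sup>2) - sqrt (\<Sum>i\<in>N. (Om' i $ u $ v)\<^sup>2))" for u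
        unfolding T_def by (rule sum_lin2)
      show ?thesis unfolding a by (rule sum_lin2)
    qed
    have T2: "(\<Sum>i\<in>N. (trace (Omh i ** S i) - trace (Om' i ** S i)) + (ln (det (Om' i)) - ln (det (Omh i))))
       = (\<Sum>i\<in>N. (trace (Omh i ** S i) - trace (Om' i ** S i))) + (\<Sum>i\<in>N. ln (det (Om' i)) - ln (det (Omh i)))"
      by (rule sum.distrib)
    show ?thesis unfolding T1 T2 sw by (simp only: distrib_left add_ac)
  qed
  finally have diff: "L_obj N S lam Omh - L_obj N S lam Om' = c * (\<Sum>i\<in>N. ln (det (Om' i)) - ln (det (Omh i))) + (\<Sum>u\<in>UNIV. \<Sum>v\<in>UNIV - {u}. T u v)" .
  have Tsum: "(\<Sum>u\<in>UNIV. \<Sum>v\<in>UNIV - {u}. T u v) \<ge> 0" by (intro sum_nonneg Tnn)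
  have termnn: "ln (det (Om' i)) - ln (det (Omh i)) \<ge> 0" if "i \<in> N" for i
  proof -
    have "det (Omh i) \<le> det (Om' i)" using fischer[of "Omh i" G] pdO that by (simp add: Om'_def)
    moreover have "det (Omh i) > 0" using pd_det_pos pdO that by blast
    ultimately show ?thesis by simp
  qed
  have c0: "c * (\<Sum>i\<in>N. ln (det (Om' i)) - ln (det (Omh i))) \<le> 0" using diff le Tsum by linarith
  define Sm where "Sm = (\<Sum>i\<in>N. ln (det (Om' i)) - ln (det (Omh i)))"
  have s1: "Sm \<le> 0" using c0 cpos unfolding Sm_def[symmetric] by (simp add: mult_le_0_iff)
  have s2: "Sm \<ge> 0" unfolding Sm_def by (intro sum_nonneg termnn)
  have S0: "Sm = 0" using s1 s2 by linarith
  have z: "\<forall>i\<in>N. ln (det (Om' i)) - ln (det (Omh i)) = 0"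
    using sum_nonneg_eq_0_iff[OF finN termnn] S0 unfolding Sm_def by simp
  show ?thesis
  proof (intro ballI allI impI)
    fix i u v assume i: "i \<in> N" and u: "u \<in> G" and v: "v \<notin> G"
    have p1: "det (Omh i) > 0" using pd_det_pos pdO i by blast
    have p2: "det (Om' i) > 0" using pd_det_pos pdO' i by blast
    have "ln (det (Om' i)) = ln (det (Omh i))" using z i by simp
    then have "det (Omh i) = det (Om' i)" using p1 p2 by (simp add: ln_inj_iff)
    then show "Omh i $ u $ v = 0" using fischer[of "Omh i" G] pdO i u v by (simp add: Om'_def)
  qed
qed



lemma quad_scale: "(c *\<^sub>R x) \<bullet> ((A::real^'n^'n) *v (c *\<^sub>R x)) = c^2 * (x \<bullet> (A *v x))"
proof -
  have "A *v (c *\<^sub>R x) = c *\<^sub>R (A *v x)"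
    by (simp add: vec_eq_iff matrix_vector_mult_def sum_distrib_left algebra_simps)
  then show ?thesis by (simp add: power2_eq_square)
qed

lemma pd_lower:
  assumes "pd_mat (A::real^'n^'n)"
  shows "\<exists>m>0. \<forall>x. x \<bullet> (A *v x) \<ge> m * (norm x)^2"
proof -
  let ?f = "\<lambda>x::real^'n. x \<bullet> (A *v x)"
  have "(axis undefined 1 :: real^'n) \<in> sphere 0 1" by simp
  then have ne: "sphere (0::real^'n) 1 \<noteq> {}" by blast
  have cont: "continuous_on (sphere 0 1) ?f"
    by (intro continuous_intros)
  obtain x0 where x0: "x0 \<in> sphere 0 1" "\<forall>y\<in>sphere 0 1. ?f x0 \<le> ?f y"
    using continuous_attains_inf[OF compact_sphere ne cont] by blast
  have "x0 \<noteq> 0" using x0(1) by auto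
  then have m: "?f x0 > 0" using assms by (simp add: pd_mat_def)
  have "?f x \<ge> ?f x0 * (norm x)^2" for x
  proof (cases "x = 0")
    case True then show ?thesis by simp
  next
    case False
    let ?y = "(1 / norm x) *\<^sub>R x"
    have "?y \<in> sphere 0 1" using False by (simp add: sphere_def)
    then have "?f x0 \<le> ?f ?y" using x0(2) by blast
    also have "?f ?y = ?f x / (norm x)^2" unfolding quad_scale by (simp add: power_divide)
    finally show ?thesis using False by (simp add: field_simps)
  qed
  then show ?thesis using m by blast
qed

lemma quad_bound:
  "\<bar>x \<bullet> ((E::real^'n^'n) *v x)\<bar> \<le> (\<Sum>j\<in>UNIV. \<Sum>k\<in>UNIV. \<bar>E$j$k\<bar>) * (norm x)^2"
proof -
  have "\<bar>x \<bullet> (E *v x)\<bar> \<le> (\<Sum>j\<in>UNIV. \<Sum>k\<in>UNIV. \<bar>x$j * E$j$k * x$k\<bar>)"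
    unfolding qf_expand by (rule order_trans[OF sum_abs], rule sum_mono, rule sum_abs)
  also have "\<dots> \<le> (\<Sum>j\<in>UNIV. \<Sum>k\<in>UNIV. \<bar>E$j$k\<bar> * (norm x)^2)"
  proof (intro sum_mono)
    fix j k
    have "\<bar>x$j\<bar> * \<bar>x$k\<bar> \<le> norm x * norm x"
      by (intro mult_mono component_le_norm_cart) auto
    then have "\<bar>E$j$k\<bar> * (\<bar>x$j\<bar> * \<bar>x$k\<bar>) \<le> \<bar>E$j$k\<bar> * (norm x * norm x)"
      by (intro mult_left_mono) auto
    then show "\<bar>x$j * E$j$k * x$k\<bar> \<le> \<bar>E$j$k\<bar> * (norm x)^2"
      by (simp add: abs_mult power2_eq_square algebra_simps)
  qed
  also have "\<dots> = (\<Sum>j\<in>UNIV. \<Sum>k\<in>UNIV. \<bar>E$j$k\<bar>) * (norm x)^2"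
    by (simp add: sum_distrib_right)
  finally show ?thesis .
qed

lemma pd_perturb:
  assumes "pd_mat (A::real^'n^'n)" "transpose E = E"
  shows "\<exists>d>0. \<forall>t. \<bar>t\<bar> < d \<longrightarrow> pd_mat (A + t *\<^sub>R E)"
proof -
  obtain m where m: "m > 0" "\<forall>x. x \<bullet> (A *v x) \<ge> m * (norm x)^2" using pd_lower[OF assms(1)] by blast
  define B where "B = (\<Sum>j\<in>UNIV. \<Sum>k\<in>UNIV. \<bar>E$j$k\<bar>)"
  have B: "B \<ge> 0" unfolding B_def by (intro sum_nonneg) auto
  define d where "d = m / (B + 1)"
  have d: "d > 0" using m B by (simp add: d_def)
  have "pd_mat (A + t *\<^sub>R E)" if t: "\<bar>t\<bar> < d" for t
    unfolding pd_mat_def sym_mat_def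
  proof (intro conjI allI impI)
    show "transpose (A + t *\<^sub>R E) = A + t *\<^sub>R E"
      using assms pd_sym by (simp add: transpose_add' transpose_scale')
  next
    fix x :: "real^'n" assume x: "x \<noteq> 0"
    have nx: "(norm x)^2 > 0" using x by simp
    have tB: "\<bar>t\<bar> * B < m"
    proof -
      have "\<bar>t\<bar> * B \<le> \<bar>t\<bar> * (B + 1)" using B by (simp add: mult_left_mono)
      also have "\<dots> < d * (B + 1)" using t B by (intro mult_strict_right_mono) auto
      also have "\<dots> = m" using B by (simp add: d_def)
      finally show ?thesis .
    qed
    have "x \<bullet> ((A + t *\<^sub>R E) *v x) = x \<bullet> (A *v x) + t * (x \<bullet> (E *v x))"
      by (simp add: mv_add mv_scale inner_add_right)
    also have "\<dots> \<ge> m * (norm x)^2 - \<bar>t\<bar> * (B * (norm x)^2)"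
    proof -
      have "\<bar>t * (x \<bullet> (E *v x))\<bar> \<le> \<bar>t\<bar> * (B * (norm x)^2)"
        unfolding abs_mult B_def by (intro mult_left_mono quad_bound) auto
      then show ?thesis using m(2)[rule_format, of x] by linarith
    qed
    finally have "x \<bullet> ((A + t *\<^sub>R E) *v x) \<ge> (m - \<bar>t\<bar> * B) * (norm x)^2"
      by (simp add: algebra_simps)
    moreover have "(m - \<bar>t\<bar> * B) * (norm x)^2 > 0" using tB nx by simp
    ultimately show "x \<bullet> ((A + t *\<^sub>R E) *v x) > 0" by linarith
  qed
  then show ?thesis using d by blast
qed


lemma ln_det_deriv:
  assumes "pd_mat (A::real^'n^'n)"
  shows "\<exists>D. ((\<lambda>t. ln (det (A + t *\<^sub>R E))) has_field_derivative D) (at 0)"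
proof -
  obtain D where D: "((\<lambda>t. det (A + t *\<^sub>R E)) has_field_derivative D) (at 0)"
    using det_affine_deriv by blast
  have pos: "det (A + 0 *\<^sub>R E) > 0" using pd_det_pos[OF assms] by simp
  have "((\<lambda>t. ln (det (A + t *\<^sub>R E))) has_field_derivative (1 / det (A + 0 *\<^sub>R E)) * D) (at 0)"
    by (rule DERIV_chain2[OF DERIV_ln_divide[OF pos] D])
  then show ?thesis by blast
qed

lemma even_deriv_zero:
  fixes H :: "real \<Rightarrow> real"
  assumes "\<And>t. H (- t) = H t" "(H has_field_derivative D) (at 0)"
  shows "D = 0"
proof -
  have "DERIV H (- 0) :> D" using assms(2) by simp
  then have "DERIV (\<lambda>x. H (- x)) 0 :> - D" by (simp only: DERIV_mirror)
  then have "DERIV H 0 :> - D" using assms(1) by simp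
  with assms(2) have "D = - D" using DERIV_unique by blast
  then show ?thesis by simp
qed

lemma sum_delta_in: "(\<Sum>b\<in>B. if b = v then X else (0::real)) = (if v \<in> B then X else 0)"
  for B :: "'n::finite set"
  by (simp add: sum.delta')

lemma pair_delta:
  fixes f :: "'n::finite \<Rightarrow> 'n \<Rightarrow> real"
  assumes "u \<noteq> v"
  shows "(\<Sum>a\<in>UNIV. \<Sum>b\<in>B a. if (a = u \<and> b = v) \<or> (a = v \<and> b = u) then f a b else 0)
    = (if v \<in> B u then f u v else 0) + (if u \<in> B v then f v u else 0)"
proof -
  have e: "(if (a = u \<and> b = v) \<or> (a = v \<and> b = u) then f a b else 0) =
     (if a = u then (if b = v then f u v else 0) else 0) + (if a = v then (if b = u then f v u else 0) else 0)" for a b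
    using assms by auto
  have i1: "(\<Sum>b\<in>B a. if a = u then (if b = v then f u v else 0) else 0) = (if a = u then (if v \<in> B u then f u v else 0) else 0)" for a
    by (cases "a = u") (simp_all add: sum_delta_in)
  have i2: "(\<Sum>b\<in>B a. if a = v then (if b = u then f v u else 0) else 0) = (if a = v then (if u \<in> B v then f v u else 0) else 0)" for a
    by (cases "a = v") (simp_all add: sum_delta_in)
  show ?thesis
    unfolding e sum.distrib i1 i2 by (simp add: sum.delta)
qed


lemma trace_affine: "trace ((A + t *\<^sub>R E) ** (S::real^'n^'n)) = trace (A ** S) + t * trace (E ** S)"
  unfolding trace_expand by (simp add: algebra_simps sum.distrib sum_distrib_left)

lemma sqrt_sum_if: "sqrt (\<Sum>i\<in>N. (if P then c i else 0)\<^sup>2) = (if P then sqrt (\<Sum>i\<in>N. (c i)\<^sup>2) else 0)"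
  by (cases P) auto

lemma fwd_dir:
  fixes N :: "'i set" and S Omh :: "'i \<Rightarrow> real^'p::finite^'p" and lam :: real and G :: "'p set"
  assumes finN: "finite N" and neN: "N \<noteq> {}"
    and psdS: "\<forall>i\<in>N. psd_mat (S i)" and lam: "lam > 0"
    and mini: "is_minimizer N S lam Omh"
    and zero: "\<forall>i\<in>N. \<forall>j k. (j \<in> G) \<noteq> (k \<in> G) \<longrightarrow> Omh i $ j $ k = 0"
    and uG: "u \<in> G" and vG: "v \<notin> G"
  shows "(1 / real (card N)) * (\<Sum>i\<in>N. (S i $ u $ v)\<^sup>2) \<le> lam\<^sup>2"
proof (rule ccontr)
  assume "\<not> ?thesis"
  then have big: "lam\<^sup>2 < (1 / real (card N)) * (\<Sum>i\<in>N. (S i $ u $ v)\<^sup>2)" by simp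
  have uv: "u \<noteq> v" using uG vG by blast
  define s where "s = (\<lambda>i. S i $ u $ v)"
  define Q where "Q = (\<Sum>i\<in>N. (s i)\<^sup>2)"
  define ns where "ns = sqrt Q"
  define n where "n = real (card N)"
  define c where "c = 1 / sqrt n"
  have npos: "n > 0" using finN neN by (simp add: n_def card_gt_0_iff)
  have bigQ: "lam\<^sup>2 * n < Q" using big npos by (simp add: Q_def s_def n_def field_simps)
  have Qpos: "Q > 0" using bigQ npos lam by (smt (verit) mult_pos_pos zero_less_power)
  define E where "E = (\<lambda>i. (\<chi> j k. if (j = u \<and> k = v) \<or> (j = v \<and> k = u) then - s i else 0) :: real^'p^'p)"
  have symE: "transpose (E i) = E i" for i
    by (auto simp: E_def transpose_def vec_eq_iff)
  have pdO: "\<forall>i\<in>N. pd_mat (Omh i)" using mini by (simp add: is_minimizer_def)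
  have symS: "S i $ a $ b = S i $ b $ a" if "i \<in> N" for i a b
  proof -
    have "transpose (S i) = S i" using psdS that unfolding psd_mat_def sym_mat_def by blast
    then have "transpose (S i) $ b $ a = S i $ b $ a" by simp
    then show ?thesis by (simp add: transpose_def)
  qed
  have "\<forall>i\<in>N. \<exists>d>0. \<forall>t. \<bar>t\<bar> < d \<longrightarrow> pd_mat (Omh i + t *\<^sub>R E i)"
    using pdO pd_perturb symE by blast
  from bchoice[OF this] obtain df where df: "\<forall>i\<in>N. df i > 0 \<and> (\<forall>t. \<bar>t\<bar> < df i \<longrightarrow> pd_mat (Omh i + t *\<^sub>R E i))"
    by blast
  define d0 where "d0 = Min (df ` N)"
  have d0: "d0 > 0" using df finN neN by (simp add: d0_def)
  have pdt: "pd_mat (Omh i + t *\<^sub>R E i)" if "i \<in> N" "\<bar>t\<bar> < d0" for i t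
  proof -
    have "d0 \<le> df i" using finN that(1) by (simp add: d0_def)
    then show ?thesis using df that by auto
  qed
  have evendet: "det (Omh i + (- t) *\<^sub>R E i) = det (Omh i + t *\<^sub>R E i)" if "i \<in> N" for i t
  proof -
    have "Dm G ** (Omh i + t *\<^sub>R E i) ** Dm G = Omh i + (- t) *\<^sub>R E i"
      unfolding vec_eq_iff Dm_conj
    proof (intro allI)
      fix j k
      show "sg G j * sg G k * (Omh i + t *\<^sub>R E i) $ j $ k = (Omh i + (- t) *\<^sub>R E i) $ j $ k"
      proof (cases "(j \<in> G) = (k \<in> G)")
        case True
        then have "E i $ j $ k = 0" using uG vG by (auto simp: E_def)
        then show ?thesis using True by (auto simp: sg_def)
      next
        case False
        then have "Omh i $ j $ k = 0" using zero that by blast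
        then show ?thesis using False by (auto simp: sg_def)
      qed
    qed
    then show ?thesis using det_Dm_conj by metis
  qed
  define H where "H = (\<lambda>t. \<Sum>i\<in>N. ln (det (Omh i + t *\<^sub>R E i)))"
  have "\<forall>i\<in>N. \<exists>D. ((\<lambda>t. ln (det (Omh i + t *\<^sub>R E i))) has_field_derivative D) (at 0)"
    using pdO ln_det_deriv by blast
  from bchoice[OF this] obtain Df where Df: "\<forall>i\<in>N. ((\<lambda>t. ln (det (Omh i + t *\<^sub>R E i))) has_field_derivative Df i) (at 0)"
    by blast
  have DH: "(H has_field_derivative (\<Sum>i\<in>N. Df i)) (at 0)"
    unfolding H_def by (rule DERIV_sum) (use Df in blast)
  have Heven: "H (- t) = H t" for t
    unfolding H_def by (rule sum.cong) (use evendet in auto)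
  have DH0: "(\<Sum>i\<in>N. Df i) = 0" by (rule even_deriv_zero[OF Heven DH])
  have trE: "trace (E i ** S i) = - 2 * (s i)\<^sup>2" if "i \<in> N" for i
  proof -
    have "trace (E i ** S i) = (\<Sum>a\<in>UNIV. \<Sum>b\<in>UNIV. if (a = u \<and> b = v) \<or> (a = v \<and> b = u) then - s i * S i $ b $ a else 0)"
      unfolding trace_expand by (intro sum.cong refl) (simp add: E_def)
    also have "\<dots> = - s i * S i $ v $ u + - s i * S i $ u $ v"
      using pair_delta[OF uv, where B="\<lambda>_. UNIV" and f="\<lambda>a b. - s i * S i $ b $ a"] by simp
    also have "\<dots> = - 2 * (s i)\<^sup>2" using symS[OF that, of v u] by (simp add: s_def power2_eq_square)
    finally show ?thesis .
  qed
  define T0 where "T0 = (\<Sum>i\<in>N. trace (Omh i ** S i))"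
  have Tr: "(\<Sum>i\<in>N. trace ((Omh i + t *\<^sub>R E i) ** S i)) = T0 + t * (- 2 * Q)" for t
  proof -
    have "(\<Sum>i\<in>N. trace ((Omh i + t *\<^sub>R E i) ** S i)) = (\<Sum>i\<in>N. trace (Omh i ** S i) + t * (- 2 * (s i)\<^sup>2))"
      by (rule sum.cong) (simp_all add: trace_affine trE)
    also have "\<dots> = T0 + t * (- 2 * Q)"
      unfolding T0_def Q_def sum.distrib sum_distrib_left by (simp add: sum_negf)
    finally show ?thesis .
  qed
  define P0 where "P0 = (\<Sum>a\<in>UNIV. \<Sum>b\<in>UNIV - {a}. sqrt (\<Sum>i\<in>N. (Omh i $ a $ b)\<^sup>2))"
  have Esq: "sqrt (\<Sum>i\<in>N. (E i $ a $ b)\<^sup>2) = (if (a = u \<and> b = v) \<or> (a = v \<and> b = u) then ns else 0)" for a b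
  proof -
    have "sqrt (\<Sum>i\<in>N. (E i $ a $ b)\<^sup>2) = sqrt (\<Sum>i\<in>N. (if (a = u \<and> b = v) \<or> (a = v \<and> b = u) then - s i else 0)\<^sup>2)"
      by (simp add: E_def)
    also have "\<dots> = (if (a = u \<and> b = v) \<or> (a = v \<and> b = u) then ns else 0)"
      unfolding sqrt_sum_if by (simp add: ns_def Q_def)
    finally show ?thesis .
  qed
  have Esum: "(\<Sum>a\<in>UNIV. \<Sum>b\<in>UNIV - {a}. sqrt (\<Sum>i\<in>N. (E i $ a $ b)\<^sup>2)) = 2 * ns"
    unfolding Esq using pair_delta[OF uv, where B="\<lambda>a. UNIV - {a}" and f="\<lambda>_ _. ns"] uv by simp
  have Pen: "(\<Sum>a\<in>UNIV. \<Sum>b\<in>UNIV - {a}. sqrt (\<Sum>i\<in>N. ((Omh i + t *\<^sub>R E i) $ a $ b)\<^sup>2)) \<le> P0 + t * (2 * ns)"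
    if t: "t \<ge> 0" for t
  proof -
    have "(\<Sum>a\<in>UNIV. \<Sum>b\<in>UNIV - {a}. sqrt (\<Sum>i\<in>N. ((Omh i + t *\<^sub>R E i) $ a $ b)\<^sup>2)) \<le>
        (\<Sum>a\<in>UNIV. \<Sum>b\<in>UNIV - {a}. sqrt (\<Sum>i\<in>N. (Omh i $ a $ b)\<^sup>2) + t * sqrt (\<Sum>i\<in>N. (E i $ a $ b)\<^sup>2))"
    proof (intro sum_mono)
      fix a b
      have "L2_set (\<lambda>i. Omh i $ a $ b + t * E i $ a $ b) N \<le> L2_set (\<lambda>i. Omh i $ a $ b) N + L2_set (\<lambda>i. t * E i $ a $ b) N"
        by (rule L2_set_triangle_ineq)
      also have "L2_set (\<lambda>i. t * E i $ a $ b) N = t * L2_set (\<lambda>i. E i $ a $ b) N"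
        using t by (simp add: L2_set_right_distrib)
      finally show "sqrt (\<Sum>i\<in>N. ((Omh i + t *\<^sub>R E i) $ a $ b)\<^sup>2) \<le> sqrt (\<Sum>i\<in>N. (Omh i $ a $ b)\<^sup>2) + t * sqrt (\<Sum>i\<in>N. (E i $ a $ b)\<^sup>2)"
        by (simp add: L2_set_def)
    qed
    also have "\<dots> = P0 + t * (\<Sum>a\<in>UNIV. \<Sum>b\<in>UNIV - {a}. sqrt (\<Sum>i\<in>N. (E i $ a $ b)\<^sup>2))"
      by (simp add: P0_def sum.distrib sum_distrib_left)
    also have "\<dots> = P0 + t * (2 * ns)" by (simp add: Esum)
    finally show ?thesis .
  qed
  define g where "g = (\<lambda>t. c * ((T0 + t * (- 2 * Q)) - H t) + lam * (P0 + t * (2 * ns)))"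
  have Dg: "(g has_field_derivative (c * ((- 2 * Q) - 0) + lam * (2 * ns))) (at 0)"
    unfolding g_def by (auto intro!: derivative_eq_intros DH[unfolded DH0])
  have neg: "c * ((- 2 * Q) - 0) + lam * (2 * ns) < 0"
  proof -
    have sn: "sqrt n > 0" using npos by simp
    have "lam * sqrt n < ns"
    proof -
      have "(lam * sqrt n)\<^sup>2 < Q" using bigQ npos by (simp add: power_mult_distrib)
      then have "sqrt ((lam * sqrt n)\<^sup>2) < sqrt Q" by (rule real_sqrt_less_mono)
      then show ?thesis using lam sn by (simp add: ns_def)
    qed
    moreover have "ns > 0" using Qpos by (simp add: ns_def)
    ultimately have "lam * sqrt n * ns < ns * ns" by (rule mult_strict_right_mono)
    also have "ns * ns = Q" using Qpos by (simp add: ns_def)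
    finally have "lam * ns < Q / sqrt n" using sn by (simp add: field_simps)
    then show ?thesis by (simp add: c_def)
  qed
  obtain d1 where d1: "d1 > 0" "\<forall>h>0. h < d1 \<longrightarrow> g 0 > g (0 + h)"
    using DERIV_neg_dec_right[OF Dg neg] by blast
  define t where "t = min d0 d1 / 2"
  have t: "t > 0" "t < d0" "t < d1" using d0 d1 by (auto simp: t_def)
  define Om where "Om = (\<lambda>i. Omh i + t *\<^sub>R E i)"
  have pdOm: "\<forall>i\<in>N. pd_mat (Om i)" using pdt t by (auto simp: Om_def)
  have F1: "(\<Sum>i\<in>N. trace (Om i ** S i) - ln (det (Om i))) = (T0 + t * (- 2 * Q)) - H t"
    unfolding sum_subtractf Om_def Tr H_def by (rule refl)
  have L1: "L_obj N S lam Om = c * ((T0 + t * (- 2 * Q)) - H t) +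
        lam * (\<Sum>a\<in>UNIV. \<Sum>b\<in>UNIV - {a}. sqrt (\<Sum>i\<in>N. ((Omh i + t *\<^sub>R E i) $ a $ b)\<^sup>2))"
    unfolding L_obj_def F1 c_def n_def by (simp add: Om_def)
  have F0: "(\<Sum>i\<in>N. trace (Omh i ** S i) - ln (det (Omh i))) = (T0 + 0 * (- 2 * Q)) - H 0"
    unfolding sum_subtractf T0_def H_def by simp
  have L0: "L_obj N S lam Omh = g 0"
    unfolding L_obj_def F0 g_def c_def n_def P0_def by simp
  have "lam * (\<Sum>a\<in>UNIV. \<Sum>b\<in>UNIV - {a}. sqrt (\<Sum>i\<in>N. ((Omh i + t *\<^sub>R E i) $ a $ b)\<^sup>2)) \<le> lam * (P0 + t * (2 * ns))"
    using Pen[of t] t lam by (intro mult_left_mono) auto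
  then have "L_obj N S lam Om \<le> g t" unfolding L1 g_def by linarith
  also have "g t < g 0" using d1(2) t by auto
  also have "g 0 = L_obj N S lam Omh" using L0 by simp
  finally have "L_obj N S lam Om < L_obj N S lam Omh" .
  moreover have "L_obj N S lam Omh \<le> L_obj N S lam Om" using mini pdOm by (simp add: is_minimizer_def)
  ultimately show False by simp
qed


theorem theorem2:
  fixes N :: "'i set" and S Omh :: "'i \<Rightarrow> real^'p::finite^'p" and lam :: real
    and G1 G2 :: "'p set"
  assumes "CARD('p) \<ge> 2"
    and "finite N" and "N \<noteq> {}"
    and "\<forall>i\<in>N. psd_mat (S i)"
    and "lam > 0"
    and "is_minimizer N S lam Omh"
    and "G1 \<union> G2 = UNIV" and "G1 \<inter> G2 = {}" and "G1 \<noteq> {}" and "G2 \<noteq> {}"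
  shows "(\<forall>u\<in>G1. \<forall>v\<in>G2. \<forall>i\<in>N. Omh i $ u $ v = 0) \<longleftrightarrow>
         (\<forall>u\<in>G1. \<forall>v\<in>G2. (1 / real (card N)) * (\<Sum>i\<in>N. (S i $ u $ v)\<^sup>2) \<le> lam\<^sup>2)"
proof -
  have G2c: "v \<in> G2 \<longleftrightarrow> v \<notin> G1" for v using assms(7,8) by blast
  have pdO: "\<forall>i\<in>N. pd_mat (Omh i)" using assms(6) by (simp add: is_minimizer_def)
  have symO: "Omh i $ a $ b = Omh i $ b $ a" if "i \<in> N" for i a b
  proof -
    have "transpose (Omh i) = Omh i" using pdO that pd_sym by blast
    then have "transpose (Omh i) $ b $ a = Omh i $ b $ a" by simp
    then show ?thesis by (simp add: transpose_def)
  qed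
  have symS: "S i $ a $ b = S i $ b $ a" if "i \<in> N" for i a b
  proof -
    have "transpose (S i) = S i" using assms(4) that unfolding psd_mat_def sym_mat_def by blast
    then have "transpose (S i) $ b $ a = S i $ b $ a" by simp
    then show ?thesis by (simp add: transpose_def)
  qed
  show ?thesis
  proof
    assume Z: "\<forall>u\<in>G1. \<forall>v\<in>G2. \<forall>i\<in>N. Omh i $ u $ v = 0"
    have zero: "\<forall>i\<in>N. \<forall>j k. (j \<in> G1) \<noteq> (k \<in> G1) \<longrightarrow> Omh i $ j $ k = 0"
    proof (intro ballI allI impI)
      fix i j k assume i: "i \<in> N" and jk: "(j \<in> G1) \<noteq> (k \<in> G1)"
      show "Omh i $ j $ k = 0"
      proof (cases "j \<in> G1")
        case True
        then have "k \<in> G2" using jk G2c by blast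
        then show ?thesis using Z True i by blast
      next
        case False
        then have "k \<in> G1" "j \<in> G2" using jk G2c by blast+
        then have "Omh i $ k $ j = 0" using Z i by blast
        then show ?thesis using symO[OF i] by metis
      qed
    qed
    show "\<forall>u\<in>G1. \<forall>v\<in>G2. (1 / real (card N)) * (\<Sum>i\<in>N. (S i $ u $ v)\<^sup>2) \<le> lam\<^sup>2"
    proof (intro ballI)
      fix u v assume u: "u \<in> G1" and v: "v \<in> G2"
      have "v \<notin> G1" using v G2c by blast
      then show "(1 / real (card N)) * (\<Sum>i\<in>N. (S i $ u $ v)\<^sup>2) \<le> lam\<^sup>2"
        using fwd_dir[OF assms(2,3,4,5,6) zero u] by blast
    qed
  next
    assume C: "\<forall>u\<in>G1. \<forall>v\<in>G2. (1 / real (card N)) * (\<Sum>i\<in>N. (S i $ u $ v)\<^sup>2) \<le> lam\<^sup>2"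
    have cond: "(1 / real (card N)) * (\<Sum>i\<in>N. (S i $ v $ u)\<^sup>2) \<le> lam\<^sup>2"
      if uv: "(u \<in> G1) \<noteq> (v \<in> G1)" for u v
    proof (cases "u \<in> G1")
      case True
      then have "v \<in> G2" using uv G2c by blast
      then have "(1 / real (card N)) * (\<Sum>i\<in>N. (S i $ u $ v)\<^sup>2) \<le> lam\<^sup>2" using C True by blast
      moreover have "(\<Sum>i\<in>N. (S i $ u $ v)\<^sup>2) = (\<Sum>i\<in>N. (S i $ v $ u)\<^sup>2)"
        by (rule sum.cong) (use symS in auto)
      ultimately show ?thesis by simp
    next
      case False
      then have "v \<in> G1" "u \<in> G2" using uv G2c by blast+
      then show ?thesis using C by blast
    qed
    have B: "\<forall>i\<in>N. \<forall>u\<in>G1. \<forall>v. v \<notin> G1 \<longrightarrow> Omh i $ u $ v = 0"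
      by (rule back_dir[OF assms(2,3,4,5,6) cond])
    show "\<forall>u\<in>G1. \<forall>v\<in>G2. \<forall>i\<in>N. Omh i $ u $ v = 0"
      using B G2c by blast
  qed
qed

end
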